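(* Let $a,b\ge1$, let $L$ be a Latin square for the $a\times a$ system and $\bar L$ a Latin square for the $b\times b$ system, both with symbols in the nonnegative integers, such that $L$ removes $[\mathrm{span}(\Delta x)]^{\perp}$ and $\bar L$ removes $[\mathrm{span}(\Delta\bar x)]^{\perp}$, where $\Delta x\in\Delta\mathcal{S}^{2a}$ and $\Delta\bar x\in\Delta\mathcal{S}^{2b}$ are nonzero. Then $L\otimes\bar L$ is a Latin square for the $(a+b)\times(a+b)$ system, and for every $k\in\mathbb{C}$ it removes $[\mathrm{span}(\mathrm{comp}(\Delta x,k\Delta\bar x))]^{\perp}$.
   Context: $\mathcal{S}$ is a signal set of size $M$ with labelling bijection $\mu:\mathbb{Z}_M\to\mathcal{S}$; $\Delta\mathcal{S}=\{s-s':s,s'\in\mathcal{S}\}$; $\mu(u)=(\mu(u_1),\dots,\mu(u_m))^T$ for $u\in\mathbb{Z}_M^m$. For $V\subseteq\mathbb{C}^N$, $V^\perp=\{y:y^Tv=0\ \forall v\in V\}$. A Latin square for the $n\times n$ system is a map $L:\mathbb{Z}_M^{n}\times\mathbb{Z}_M^{n}\to\Sigma$ with no symbol repeated in any row or column. For nonzero $w\in\mathbb{C}^{2n}$, $L$ removes $[\mathrm{span}(w)]^\perp$ if $L(u,v)=L(u',v')$ whenever $[\mu(u)^T-\mu(u')^T\;\;\mu(v)^T-\mu(v')^T]^T\in\mathrm{span}(w)\setminus\{0\}$. For $y\in\mathbb{C}^{2a}$, $z\in\mathbb{C}^{2b}$, the compound vector is $\mathrm{comp}(y,z)=[y_{[1:a]}^T\;z_{[1:b]}^T\;y_{[a+1:2a]}^T\;z_{[b+1:2b]}^T]^T\in\mathbb{C}^{2a+2b}$,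 where $y_{[i:j]}$ is the subvector of components $i$ through $j$. The Cartesian product $L\otimes\bar L$ is defined on $\mathbb{Z}_M^{a+b}\times\mathbb{Z}_M^{a+b}$ by writing row index $(u,\bar u)$ and column index $(v,\bar v)$ with $u,v\in\mathbb{Z}_M^a$ (first $a$ components) and $\bar u,\bar v\in\mathbb{Z}_M^b$ (last $b$ components), and setting $(L\otimes\bar L)((u,\bar u),(v,\bar v))=L(u,v)+\bar L(\bar u,\bar v)\,(\max L+1)$, where $\max L$ is the largest symbol appearing in $L$. *)

theory Defs
  imports Complex_Main
begin

text \<open>Vectors are lists. Z_M is {0..<M} (nat), so Z_M^n is the set of nat lists of
  length n with entries below M. Vectors in C^N are complex lists of length N.\<close>

definition zm_vecs :: "nat \<Rightarrow> nat \<Rightarrow> nat list set" where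
  "zm_vecs M n = {u. length u = n \<and> (\<forall>x\<in>set u. x < M)}"

definition signal_set :: "nat \<Rightarrow> complex set \<Rightarrow> (nat \<Rightarrow> complex) \<Rightarrow> bool" where
  "signal_set M S mu \<longleftrightarrow> bij_betw mu {..<M} S"

definition diff_set :: "complex set \<Rightarrow> complex set" where
  "diff_set S = {s - s' | s s'. s \<in> S \<and> s' \<in> S}"

definition latin_square :: "nat \<Rightarrow> nat \<Rightarrow> (nat list \<Rightarrow> nat list \<Rightarrow> 'b) \<Rightarrow> bool" where
  "latin_square M n L \<longleftrightarrow>
     (\<forall>u\<in>zm_vecs M n. inj_on (\<lambda>v. L u v) (zm_vecs M n)) \<and>
     (\<forall>v\<in>zm_vecs M n. inj_on (\<lambda>u. L u v) (zm_vecs M n))"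

definition cspan :: "complex list \<Rightarrow> complex list set" where
  "cspan w = {map (\<lambda>x. c * x) w | c. True}"

definition zero_vec :: "nat \<Rightarrow> complex list" where
  "zero_vec N = replicate N 0"

definition diff_vec :: "(nat \<Rightarrow> complex) \<Rightarrow> nat list \<Rightarrow> nat list \<Rightarrow> nat list \<Rightarrow> nat list \<Rightarrow> complex list" where
  "diff_vec mu u u' v v' =
     map2 (\<lambda>p q. mu p - mu q) u u' @ map2 (\<lambda>p q. mu p - mu q) v v'"

definition removes_perp_span ::
  "nat \<Rightarrow> (nat \<Rightarrow> complex) \<Rightarrow> nat \<Rightarrow> (nat list \<Rightarrow> nat list \<Rightarrow> 'b) \<Rightarrow> complex list \<Rightarrow> bool" where
  "removes_perp_span M mu n L w \<longleftrightarrow>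
     (\<forall>u\<in>zm_vecs M n. \<forall>u'\<in>zm_vecs M n. \<forall>v\<in>zm_vecs M n. \<forall>v'\<in>zm_vecs M n.
        diff_vec mu u u' v v' \<in> cspan w - {zero_vec (2 * n)} \<longrightarrow> L u v = L u' v')"

definition comp_vec :: "nat \<Rightarrow> nat \<Rightarrow> complex list \<Rightarrow> complex list \<Rightarrow> complex list" where
  "comp_vec a b y z = take a y @ take b z @ drop a y @ drop b z"

definition latin_max :: "nat \<Rightarrow> nat \<Rightarrow> (nat list \<Rightarrow> nat list \<Rightarrow> nat) \<Rightarrow> nat" where
  "latin_max M a L = Max {L u v | u v. u \<in> zm_vecs M a \<and> v \<in> zm_vecs M a}"

definition latin_cart ::
  "nat \<Rightarrow> nat \<Rightarrow> (nat list \<Rightarrow> nat list \<Rightarrow> nat) \<Rightarrow> (nat list \<Rightarrow> nat list \<Rightarrow> nat)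
     \<Rightarrow> nat list \<Rightarrow> nat list \<Rightarrow> nat" where
  "latin_cart M a L Lb x y =
     L (take a x) (take a y) + Lb (drop a x) (drop a y) * (latin_max M a L + 1)"

end

theory Submission
  imports Defs
begin

lemma zm_take: "x \<in> zm_vecs M (a + b) \<Longrightarrow> take a x \<in> zm_vecs M a"
  by (auto simp: zm_vecs_def dest: in_set_takeD)

lemma zm_drop: "x \<in> zm_vecs M (a + b) \<Longrightarrow> drop a x \<in> zm_vecs M b"
  by (auto simp: zm_vecs_def dest: in_set_dropD)

lemma zm_finite: "finite (zm_vecs M n)"
proof -
  have "zm_vecs M n \<subseteq> {xs. set xs \<subseteq> {..<M} \<and> length xs = n}"
    by (auto simp: zm_vecs_def)
  thus ?thesis using finite_lists_length_eq[of "{..<M}" n] finite_subset by blast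
qed

lemma le_max: assumes "u \<in> zm_vecs M a" "v \<in> zm_vecs M a"
  shows "L u v \<le> latin_max M a L"
proof -
  have "{L u v | u v. u \<in> zm_vecs M a \<and> v \<in> zm_vecs M a} = (\<lambda>(u,v). L u v) ` (zm_vecs M a \<times> zm_vecs M a)"
    by auto
  hence fin: "finite {L u v | u v. u \<in> zm_vecs M a \<and> v \<in> zm_vecs M a}"
    using zm_finite by simp
  show ?thesis unfolding latin_max_def using assms by (intro Max_ge[OF fin]) blast
qed

lemma decode:
  fixes l1 l2 b1 b2 m :: nat
  assumes "l1 < m" "l2 < m" "l1 + b1 * m = l2 + b2 * m"
  shows "l1 = l2 \<and> b1 = b2"
proof -
  have "l1 = (l1 + b1 * m) mod m" using assms(1) by simp
  also have "\<dots> = (l2 + b2 * m) mod m" using assms(3) by simp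
  also have "\<dots> = l2" using assms(2) by simp
  finally have e: "l1 = l2" .
  hence "b1 * m = b2 * m" using assms(3) by simp
  thus ?thesis using e assms(1) by simp
qed

lemma split_eq: "x = take a x @ drop a x" by simp

lemma latin_part:
  assumes "latin_square M a L" "latin_square M b Lb"
  shows "latin_square M (a + b) (latin_cart M a L Lb)"
proof -
  let ?m = "latin_max M a L + 1"
  have lt: "L u v < ?m" if "u \<in> zm_vecs M a" "v \<in> zm_vecs M a" for u v
    using le_max[where L=L, OF that] by simp
  have row: "inj_on (\<lambda>v. latin_cart M a L Lb u v) (zm_vecs M (a+b))" if u: "u \<in> zm_vecs M (a+b)" for u
  proof (rule inj_onI)
    fix v v' assume v: "v \<in> zm_vecs M (a+b)" and v': "v' \<in> zm_vecs M (a+b)"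
      and eq: "latin_cart M a L Lb u v = latin_cart M a L Lb u v'"
    have d: "L (take a u) (take a v) = L (take a u) (take a v') \<and>
             Lb (drop a u) (drop a v) = Lb (drop a u) (drop a v')"
      using decode[OF lt lt] eq zm_take[OF u] zm_take[OF v] zm_take[OF v']
      unfolding latin_cart_def by blast
    have "take a v = take a v'"
      using d assms(1) zm_take[OF u] zm_take[OF v] zm_take[OF v']
      unfolding latin_square_def inj_on_def by blast
    moreover have "drop a v = drop a v'"
      using d assms(2) zm_drop[OF u] zm_drop[OF v] zm_drop[OF v']
      unfolding latin_square_def inj_on_def by blast
    ultimately show "v = v'" by (metis split_eq)
  qed
  have col: "inj_on (\<lambda>u. latin_cart M a L Lb u v) (zm_vecs M (a+b))" if v: "v \<in> zm_vecs M (a+b)" for v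
  proof (rule inj_onI)
    fix u u' assume u: "u \<in> zm_vecs M (a+b)" and u': "u' \<in> zm_vecs M (a+b)"
      and eq: "latin_cart M a L Lb u v = latin_cart M a L Lb u' v"
    have d: "L (take a u) (take a v) = L (take a u') (take a v) \<and>
             Lb (drop a u) (drop a v) = Lb (drop a u') (drop a v)"
      using decode[OF lt lt] eq zm_take[OF u] zm_take[OF v] zm_take[OF u']
      unfolding latin_cart_def by blast
    have "take a u = take a u'"
      using d assms(1) zm_take[OF u] zm_take[OF v] zm_take[OF u']
      unfolding latin_square_def inj_on_def by blast
    moreover have "drop a u = drop a u'"
      using d assms(2) zm_drop[OF u] zm_drop[OF v] zm_drop[OF u']
      unfolding latin_square_def inj_on_def by blast
    ultimately show "u = u'" by (metis split_eq)
  qed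
  show ?thesis unfolding latin_square_def using row col by blast
qed

lemma map_nonzero:
  assumes "c \<noteq> 0" "w \<noteq> zero_vec n" "length w = n"
  shows "map (\<lambda>x. c * x) w \<noteq> zero_vec n"
proof
  assume h: "map (\<lambda>x. c * x) w = zero_vec n"
  have "w = zero_vec n"
  proof (rule nth_equalityI)
    show "length w = length (zero_vec n)" using assms by (simp add: zero_vec_def)
    fix i assume "i < length w"
    have "(map (\<lambda>x. c * x) w) ! i = zero_vec n ! i" using h by simp
    hence "c * w ! i = 0" using \<open>i < length w\<close> assms(3) by (simp add: zero_vec_def)
    thus "w ! i = zero_vec n ! i" using assms \<open>i < length w\<close> by (simp add: zero_vec_def)
  qed
  thus False using assms by simp
qed

lemma diff_zero:
  assumes "u \<in> zm_vecs M n" "u' \<in> zm_vecs M n" "inj_on mu {..<M}"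
    "map2 (\<lambda>p q. mu p - mu q) u u' = replicate n (0::complex)"
  shows "u = u'"
proof (rule nth_equalityI)
  show "length u = length u'" using assms by (simp add: zm_vecs_def)
  fix i assume i: "i < length u"
  have l: "length u = n" "length u' = n" using assms by (auto simp: zm_vecs_def)
  have "mu (u!i) - mu (u'!i) = 0" using arg_cong[OF assms(4), of "\<lambda>l. l ! i"] i l by simp
  moreover have "u!i < M" "u'!i < M" using assms(1,2) i l by (auto simp: zm_vecs_def)
  ultimately show "u!i = u'!i" using assms(3) unfolding inj_on_def by auto
qed

lemma map2_take: "take a (map2 f x y) = map2 f (take a x) (take a y)"
  by (simp add: take_zip take_map)

lemma map2_drop: "drop a (map2 f x y) = map2 f (drop a x) (drop a y)"
  by (simp add: drop_zip drop_map)

theorem lemma10: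
  fixes M a b :: nat and S :: "complex set" and mu :: "nat \<Rightarrow> complex"
    and L Lb :: "nat list \<Rightarrow> nat list \<Rightarrow> nat" and dx dxb :: "complex list"
  assumes "signal_set M S mu"
    and "a \<ge> 1" and "b \<ge> 1"
    and "latin_square M a L" and "latin_square M b Lb"
    and "length dx = 2 * a" and "set dx \<subseteq> diff_set S" and "dx \<noteq> zero_vec (2 * a)"
    and "length dxb = 2 * b" and "set dxb \<subseteq> diff_set S" and "dxb \<noteq> zero_vec (2 * b)"
    and "removes_perp_span M mu a L dx" and "removes_perp_span M mu b Lb dxb"
  shows "latin_square M (a + b) (latin_cart M a L Lb) \<and>
         (\<forall>k::complex. removes_perp_span M mu (a + b) (latin_cart M a L Lb)
                         (comp_vec a b dx (map (\<lambda>x. k * x) dxb)))"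
proof (intro conjI allI)
  show "latin_square M (a + b) (latin_cart M a L Lb)" using latin_part assms(4,5) .
  fix k :: complex
  have inj: "inj_on mu {..<M}" using assms(1) by (simp add: signal_set_def bij_betw_def)
  show "removes_perp_span M mu (a + b) (latin_cart M a L Lb) (comp_vec a b dx (map (\<lambda>x. k * x) dxb))"
    unfolding removes_perp_span_def
  proof (intro ballI impI)
    fix x x' y y' assume x: "x \<in> zm_vecs M (a+b)" and x': "x' \<in> zm_vecs M (a+b)"
      and y: "y \<in> zm_vecs M (a+b)" and y': "y' \<in> zm_vecs M (a+b)"
      and h: "diff_vec mu x x' y y' \<in> cspan (comp_vec a b dx (map (\<lambda>x. k * x) dxb)) - {zero_vec (2 * (a + b))}"
    define D1 where "D1 = map2 (\<lambda>p q. mu p - mu q) x x'"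
    define D2 where "D2 = map2 (\<lambda>p q. mu p - mu q) y y'"
    have lens: "length x = a+b" "length x' = a+b" "length y = a+b" "length y' = a+b"
      using x x' y y' by (auto simp: zm_vecs_def)
    have lD: "length D1 = a+b" "length D2 = a+b" using lens by (auto simp: D1_def D2_def)
    obtain c where c: "D1 @ D2 = map (\<lambda>z. c * z) (comp_vec a b dx (map (\<lambda>x. k * x) dxb))"
      and nz: "D1 @ D2 \<noteq> zero_vec (2*(a+b))"
    proof -
      from h obtain c where "diff_vec mu x x' y y' = map (\<lambda>z. c * z) (comp_vec a b dx (map (\<lambda>x. k * x) dxb))"
        "diff_vec mu x x' y y' \<noteq> zero_vec (2*(a+b))" unfolding cspan_def by blast
      thus ?thesis using that unfolding diff_vec_def D1_def D2_def by blast
    qed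
    have ta: "length (take a dx) = a" "length (take b dxb) = b" using assms(6,9) by auto
    have e: "D1 @ D2 = (map (\<lambda>z. c * z) (take a dx) @ map (\<lambda>z. c * k * z) (take b dxb))
              @ (map (\<lambda>z. c * z) (drop a dx) @ map (\<lambda>z. c * k * z) (drop b dxb))"
      using c by (simp add: comp_vec_def take_map drop_map mult.assoc)
    have "D1 = map (\<lambda>z. c * z) (take a dx) @ map (\<lambda>z. c * k * z) (take b dxb)
        \<and> D2 = map (\<lambda>z. c * z) (drop a dx) @ map (\<lambda>z. c * k * z) (drop b dxb)"
      by (rule append_eq_append_conv[THEN iffD1, OF _ e]) (simp add: lD ta assms(6,9))
    hence E1: "D1 = map (\<lambda>z. c * z) (take a dx) @ map (\<lambda>z. c * k * z) (take b dxb)"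
      and E2: "D2 = map (\<lambda>z. c * z) (drop a dx) @ map (\<lambda>z. c * k * z) (drop b dxb)" by auto
    have tD1: "take a D1 = map (\<lambda>z. c * z) (take a dx)" "drop a D1 = map (\<lambda>z. c * k * z) (take b dxb)"
      using E1 ta by auto
    have tD2: "take a D2 = map (\<lambda>z. c * z) (drop a dx)" "drop a D2 = map (\<lambda>z. c * k * z) (drop b dxb)"
      using E2 ta assms(6) by auto
    have cnz: "c \<noteq> 0"
    proof
      assume "c = 0"
      hence "D1 @ D2 = zero_vec (2*(a+b))"
        using c by (simp add: zero_vec_def comp_vec_def assms(6,9) map_replicate_const)
      thus False using nz by simp
    qed
    have dA: "diff_vec mu (take a x) (take a x') (take a y) (take a y') = map (\<lambda>z. c * z) dx"
      unfolding diff_vec_def using tD1 tD2 by (simp add: D1_def D2_def map2_take flip: map_append)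
    have dB: "diff_vec mu (drop a x) (drop a x') (drop a y) (drop a y') = map (\<lambda>z. (c*k) * z) dxb"
      unfolding diff_vec_def using tD1 tD2
      by (simp add: D1_def D2_def map2_drop flip: map_append)
    have LA: "L (take a x) (take a y) = L (take a x') (take a y')"
    proof -
      have "map (\<lambda>z. c * z) dx \<in> cspan dx - {zero_vec (2*a)}"
        using map_nonzero[OF cnz assms(8,6)] by (auto simp: cspan_def)
      thus ?thesis using assms(12) zm_take[OF x] zm_take[OF x'] zm_take[OF y] zm_take[OF y'] dA
        unfolding removes_perp_span_def by metis
    qed
    have LB: "Lb (drop a x) (drop a y) = Lb (drop a x') (drop a y')"
    proof (cases "c * k = 0")
      case True
      have "D1 @ D2 = (map (\<lambda>z. c * z) (take a dx) @ replicate b 0)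
              @ (map (\<lambda>z. c * z) (drop a dx) @ replicate b 0)"
        using e True ta assms(9) by (simp add: map_replicate_const)
      hence "drop a D1 = replicate b 0" "drop a D2 = replicate b 0"
        using tD1 tD2 True ta assms(9) by (auto simp: map_replicate_const)
      hence "drop a x = drop a x'" "drop a y = drop a y'"
        using diff_zero[OF zm_drop[OF x] zm_drop[OF x'] inj] diff_zero[OF zm_drop[OF y] zm_drop[OF y'] inj]
        by (auto simp: D1_def D2_def map2_drop)
      thus ?thesis by simp
    next
      case False
      have "map (\<lambda>z. (c*k) * z) dxb \<in> cspan dxb - {zero_vec (2*b)}"
        using map_nonzero[OF False assms(11,9)] by (auto simp: cspan_def)
      thus ?thesis using assms(13) zm_drop[OF x] zm_drop[OF x'] zm_drop[OF y] zm_drop[OF y'] dB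
        unfolding removes_perp_span_def by metis
    qed
    show "latin_cart M a L Lb x y = latin_cart M a L Lb x' y'"
      unfolding latin_cart_def using LA LB by simp
  qed
qed

end
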